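(* Let $d \in \mathbb{N}$ and let $G$ be a (nonempty) subgraph of $Q_n$ with average degree at least $d$. Then $G$ contains at least $\frac{d!\,|V(G)|}{2}$ geodesics of length $d$.
   Context: The hypercube $Q_n$ has vertex set $\{0,1\}^n$, two vertices adjacent iff they differ in exactly one coordinate; the direction of an edge is that coordinate. A path in $Q_n$ is a geodesic if no two of its edges have the same direction; length means number of edges. Geodesics are counted as paths (subgraphs), i.e. a path and its reversal are counted once. The average degree of $G$ is $2|E(G)|/|V(G)|$. *)

theory Defs
  imports Main "HOL.Real"
begin

definition cube_verts :: "nat \<Rightarrow> bool list set" where
  "cube_verts n = {v. length v = n}"

definition cube_adj :: "bool list \<Rightarrow> bool list \<Rightarrow> bool" where
  "cube_adj u v \<longleftrightarrow> length u = length v \<and> card {i. i < length u \<and> u ! i \<noteq> v ! i} = 1"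

definition edge_dir :: "bool list \<Rightarrow> bool list \<Rightarrow> nat" where
  "edge_dir u v = (THE i. i < length u \<and> u ! i \<noteq> v ! i)"

definition cube_subgraph :: "nat \<Rightarrow> bool list set \<Rightarrow> bool list set set \<Rightarrow> bool" where
  "cube_subgraph n V E \<longleftrightarrow> V \<subseteq> cube_verts n \<and>
     E \<subseteq> {{u, v} | u v. u \<in> V \<and> v \<in> V \<and> cube_adj u v}"

definition is_geodesic_seq :: "bool list set \<Rightarrow> bool list set set \<Rightarrow> nat \<Rightarrow> bool list list \<Rightarrow> bool" where
  "is_geodesic_seq V E d p \<longleftrightarrow> length p = d + 1 \<and> set p \<subseteq> V \<and> distinct p \<and>
     (\<forall>i<d. {p ! i, p ! (i + 1)} \<in> E) \<and>
     distinct (map (\<lambda>i. edge_dir (p ! i) (p ! (i + 1))) [0..<d])"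

definition geodesics :: "bool list set \<Rightarrow> bool list set set \<Rightarrow> nat \<Rightarrow> bool list list set set" where
  "geodesics V E d = {{p, rev p} | p. is_geodesic_seq V E d p}"

end

theory Submission
  imports Defs "HOL-Combinatorics.Multiset_Permutations"
begin


definition flip :: "nat \<Rightarrow> bool list \<Rightarrow> bool list" where
  "flip i x = x[i := (\<not> x ! i)]"

fun valid :: "bool list set set \<Rightarrow> bool list \<Rightarrow> nat list \<Rightarrow> bool" where
  "valid E x [] = True"
| "valid E x (i # t) = (i < length x \<and> {x, flip i x} \<in> E \<and> valid E (flip i x) t)"

definition Edge :: "bool list set set \<Rightarrow> bool list \<Rightarrow> nat \<Rightarrow> bool" where
  "Edge E x i \<longleftrightarrow> i < length x \<and> {x, flip i x} \<in> E"

definition R :: "bool list set set \<Rightarrow> nat list \<Rightarrow> nat \<Rightarrow> bool list \<Rightarrow> nat" where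
  "R E s k x = length (filter (\<lambda>t. length t = k \<and> valid E x t) (subseqs s))"

lemma length_flip[simp]: "length (flip i x) = length x"
  by (simp add: flip_def)

lemma flip_flip[simp]: "i < length x \<Longrightarrow> flip i (flip i x) = x"
  by (simp add: flip_def)

lemma flip_neq: "i < length x \<Longrightarrow> flip i x \<noteq> x"
  by (metis flip_def list_update_beyond nth_list_update_eq order_less_imp_le ) 

lemma R_0[simp]: "R E s 0 x = 1"
  unfolding R_def by (induct s) (auto simp: Let_def filter_map o_def)

lemma R_Nil_Suc[simp]: "R E [] (Suc k) x = 0"
  unfolding R_def by simp

lemma R_Cons_Suc: "R E (N # s) (Suc k) x = R E s (Suc k) x + (if Edge E x N then R E s k (flip N x) else 0)"
  unfolding R_def Edge_def by (auto simp: Let_def filter_map o_def)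

lemma R_Cons_pos: "k \<ge> 1 \<Longrightarrow> R E (N # s) k x = R E s k x + (if Edge E x N then R E s (k-1) (flip N x) else 0)"
  using R_Cons_Suc[of E N s "k-1" x] by simp

lemma R_mono_pos: "R E s (Suc k) x > 0 \<Longrightarrow> R E s k x > 0"
proof (induct s arbitrary: k x)
  case Nil then show ?case by simp
next
  case (Cons N s)
  show ?case
  proof (cases k)
    case 0 then show ?thesis by simp
  next
    case (Suc k')
    from Cons.prems have "R E s (Suc k) x > 0 \<or> (Edge E x N \<and> R E s k (flip N x) > 0)"
      by (auto simp: R_Cons_Suc split: if_splits)
    then show ?thesis
    proof
      assume "R E s (Suc k) x > 0"
      then have "R E s k x > 0" using Cons.hyps by blast
      then show ?thesis using Suc by (simp add: R_Cons_Suc)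
    next
      assume "Edge E x N \<and> R E s k (flip N x) > 0"
      then have "Edge E x N" "R E s k' (flip N x) > 0" using Cons.hyps Suc by auto
      then show ?thesis using Suc by (simp add: R_Cons_Suc)
    qed
  qed
qed

lemma R_1: "R E s 1 x = length (filter (Edge E x) s)"
  by (induct s) (auto simp: R_Cons_Suc[of E _ _ 0, simplified])


lemma pos_down: "(\<And>k. a (Suc k) > (0::nat) \<Longrightarrow> a k > 0) \<Longrightarrow> a k > 0 \<Longrightarrow> j \<le> k \<Longrightarrow> a j > 0"
  by (induct k arbitrary: j) (auto simp: le_Suc_eq)

definition Sx :: "nat \<Rightarrow> (nat \<Rightarrow> nat) \<Rightarrow> nat set" where
  "Sx d a = {k. 1 \<le> k \<and> k < d \<and> a k > 0}"

lemma Sx_finite[simp]: "finite (Sx d a)"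
  unfolding Sx_def by (rule finite_subset[of _ "{..<d}"]) auto

lemma Sx_mono: "Sx d a \<subseteq> Sx d (\<lambda>k. a k + b (k-1))"
  unfolding Sx_def by auto

lemma least_zero:
  assumes mono: "\<And>k. a (Suc k) > (0::nat) \<Longrightarrow> a k > 0" and a0: "a 0 > 0" and z: "a (d-1) = 0"
  defines "m \<equiv> LEAST k. a k = 0"
  shows "a m = 0" "m \<le> d - 1" "m \<ge> 1" "\<And>j. j < m \<Longrightarrow> a j > 0" "\<And>j. j \<ge> m \<Longrightarrow> a j = 0"
proof -
  show am: "a m = 0" unfolding m_def by (rule LeastI[of _ "d-1"]) (rule z)
  show "m \<le> d - 1" unfolding m_def by (rule Least_le) (rule z)
  show "m \<ge> 1" using am a0 by (cases m) auto
  show "\<And>j. j < m \<Longrightarrow> a j > 0" unfolding m_def using not_less_Least by blast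
  show "a j = 0" if "j \<ge> m" for j
  proof (rule ccontr)
    assume "a j \<noteq> 0"
    then have "a j > 0" by simp
    from pos_down[where a=a, OF mono this that] have "a m > 0" .
    with am show False by simp
  qed
qed

lemma pair_core1:
  assumes ma: "\<And>k. a (Suc k) > (0::nat) \<Longrightarrow> a k > 0" and a0: "a 0 > 0"
    and mb: "\<And>k. b (Suc k) > (0::nat) \<Longrightarrow> b k > 0"
    and za: "a (d-1) = 0" and pb: "b (d-1) > 0" and d: "d \<ge> 1"
  shows "card (Sx d (\<lambda>k. a k + b (k-1)) - Sx d a) \<ge> 1"
proof -
  define m where "m = (LEAST k. a k = 0)"
  note L = least_zero[OF ma a0 za, folded m_def]
  have "b (m-1) > 0" using pos_down[where a=b, OF mb pb, of "m-1"] L(2) by simp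
  then have "m \<in> Sx d (\<lambda>k. a k + b (k-1)) - Sx d a" using L d unfolding Sx_def by auto
  then show ?thesis
    by (metis One_nat_def Suc_leI card_gt_0_iff empty_iff finite_Diff Sx_finite)
qed

lemma pair_core2:
  assumes ma: "\<And>k. a (Suc k) > (0::nat) \<Longrightarrow> a k > 0" and a0: "a 0 > 0"
    and mb: "\<And>k. b (Suc k) > (0::nat) \<Longrightarrow> b k > 0" and b0: "b 0 > 0"
    and za: "a (d-1) = 0" and zb: "b (d-1) = 0" and d: "d \<ge> 1"
    and le: "(LEAST k. a k = 0) \<le> (LEAST k. b k = 0)"
  shows "card (Sx d (\<lambda>k. a k + b (k-1)) - Sx d a) + card (Sx d (\<lambda>k. b k + a (k-1)) - Sx d b) \<ge> 2"
proof -
  define m where "m = (LEAST k. a k = 0)"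
  define m' where "m' = (LEAST k. b k = 0)"
  note L = least_zero[OF ma a0 za, folded m_def]
  note L' = least_zero[OF mb b0 zb, folded m'_def]
  have le': "m \<le> m'" using le m_def m'_def by simp
  have A1: "m \<in> Sx d (\<lambda>k. a k + b (k-1)) - Sx d a"
    using L L' le' d unfolding Sx_def by auto
  show ?thesis
  proof (cases "m = m'")
    case True
    have "m' \<in> Sx d (\<lambda>k. b k + a (k-1)) - Sx d b"
      using L L' True d unfolding Sx_def by auto
    then have "card (Sx d (\<lambda>k. b k + a (k-1)) - Sx d b) \<ge> 1"
      by (metis One_nat_def Suc_leI card_gt_0_iff empty_iff finite_Diff Sx_finite)
    moreover have "card (Sx d (\<lambda>k. a k + b (k-1)) - Sx d a) \<ge> 1" using A1
      by (metis One_nat_def Suc_leI card_gt_0_iff empty_iff finite_Diff Sx_finite)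
    ultimately show ?thesis by simp
  next
    case False
    then have lt: "m < m'" using le' by simp
    have A2: "Suc m \<in> Sx d (\<lambda>k. a k + b (k-1)) - Sx d a"
      using L L' lt d unfolding Sx_def by auto
    have "{m, Suc m} \<subseteq> Sx d (\<lambda>k. a k + b (k-1)) - Sx d a" using A1 A2 by simp
    then have "card {m, Suc m} \<le> card (Sx d (\<lambda>k. a k + b (k-1)) - Sx d a)"
      by (intro card_mono) auto
    then show ?thesis by simp
  qed
qed

lemma pair_ineq:
  assumes ma: "\<And>k. a (Suc k) > (0::nat) \<Longrightarrow> a k > 0" and a0: "a 0 > 0"
    and mb: "\<And>k. b (Suc k) > (0::nat) \<Longrightarrow> b k > 0" and b0: "b 0 > 0" and d: "d \<ge> 1"
  shows "int (card (Sx d a)) + int (card (Sx d b)) + 2 \<le>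
    int (card (Sx d (\<lambda>k. a k + b (k-1)))) + int (card (Sx d (\<lambda>k. b k + a (k-1)))) + int (a (d-1)) + int (b (d-1))"
proof -
  have e1: "card (Sx d (\<lambda>k. a k + b (k-1))) = card (Sx d a) + card (Sx d (\<lambda>k. a k + b (k-1)) - Sx d a)"
    using Sx_mono[of d a b] by (metis Sx_finite card_Diff_subset card_mono le_add_diff_inverse)
  have e2: "card (Sx d (\<lambda>k. b k + a (k-1))) = card (Sx d b) + card (Sx d (\<lambda>k. b k + a (k-1)) - Sx d b)"
    using Sx_mono[of d b a] by (metis Sx_finite card_Diff_subset card_mono le_add_diff_inverse)
  have "card (Sx d (\<lambda>k. a k + b (k-1)) - Sx d a) + card (Sx d (\<lambda>k. b k + a (k-1)) - Sx d b) + a (d-1) + b (d-1) \<ge> 2"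
  proof (cases "a (d-1) = 0"; cases "b (d-1) = 0")
    assume za: "a (d-1) = 0" and zb: "b (d-1) = 0"
    show ?thesis
    proof (cases "(LEAST k. a k = 0) \<le> (LEAST k. b k = 0)")
      case True then show ?thesis using pair_core2[where a=a and b=b, OF ma a0 mb b0 za zb d] by simp
    next
      case False then show ?thesis using pair_core2[where a=b and b=a, OF mb b0 ma a0 zb za d] by simp
    qed
  next
    assume za: "a (d-1) = 0" and zb: "b (d-1) \<noteq> 0"
    then show ?thesis using pair_core1[where a=a and b=b, OF ma a0 mb za _ d] by simp
  next
    assume za: "a (d-1) \<noteq> 0" and zb: "b (d-1) = 0"
    then show ?thesis using pair_core1[where a=b and b=a, OF mb b0 ma zb _ d] by simp
  next
    assume za: "a (d-1) \<noteq> 0" and zb: "b (d-1) \<noteq> 0"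
    then show ?thesis by simp
  qed
  then show ?thesis using e1 e2 by simp
qed


lemma Sx_cong: "(\<And>k. k \<ge> 1 \<Longrightarrow> f k = g k) \<Longrightarrow> Sx d f = Sx d g"
  unfolding Sx_def by auto

lemma R_noedge: "\<not> Edge E x N \<Longrightarrow> R E (N # s) k x = R E s k x"
  by (cases k) (auto simp: R_Cons_Suc)

lemma Edge_flip: "Edge E x N \<Longrightarrow> Edge E (flip N x) N"
  unfolding Edge_def by (auto simp: insert_commute)

lemma invariant:
  assumes EV: "\<And>u v. {u,v} \<in> E \<Longrightarrow> u \<in> V" and fin: "finite V" and d: "d \<ge> 1"
  shows "(\<Sum>x\<in>V. int (R E s 1 x)) \<le> (\<Sum>x\<in>V. int (R E s d x) + int (card (Sx d (\<lambda>k. R E s k x))))"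
proof (induct s)
  case Nil
  then show ?case by (simp add: sum_nonneg)
next
  case (Cons N s)
  define F where "F t x = int (R E t d x) + int (card (Sx d (\<lambda>k. R E t k x))) - int (R E t 1 x)" for t x
  define D where "D x = F (N # s) x - F s x" for x
  define W where "W = {x \<in> V. Edge E x N}"
  have IH: "(\<Sum>x\<in>V. F s x) \<ge> 0" using Cons by (simp add: F_def sum_subtractf)
  have EdgeV: "x \<in> V" if "Edge E x N" for x using that EV unfolding Edge_def by blast
  have finW: "finite W" using fin W_def by simp
  have D0: "D x = 0" if "\<not> Edge E x N" for x
    using that by (simp add: D_def F_def R_noedge)
  have Dval: "D x = int (R E s (d-1) (flip N x)) + int (card (Sx d (\<lambda>k. R E s k x + R E s (k-1) (flip N x))))
     - int (card (Sx d (\<lambda>k. R E s k x))) - 1" if e: "Edge E x N" for x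
  proof -
    have "Sx d (\<lambda>k. R E (N # s) k x) = Sx d (\<lambda>k. R E s k x + R E s (k-1) (flip N x))"
      by (rule Sx_cong) (simp add: R_Cons_pos e)
    then show ?thesis using e d by (simp add: D_def F_def R_Cons_pos)
  qed
  have pairs: "D x + D (flip N x) \<ge> 0" if xW: "x \<in> W" for x
  proof -
    have e: "Edge E x N" using xW W_def by simp
    have e': "Edge E (flip N x) N" using Edge_flip[OF e] .
    have ff: "flip N (flip N x) = x" using e unfolding Edge_def by simp
    define a where "a = (\<lambda>k. R E s k x)"
    define b where "b = (\<lambda>k. R E s k (flip N x))"
    have "int (card (Sx d a)) + int (card (Sx d b)) + 2 \<le>
      int (card (Sx d (\<lambda>k. a k + b (k-1)))) + int (card (Sx d (\<lambda>k. b k + a (k-1)))) + int (a (d-1)) + int (b (d-1))"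
      using d by (intro pair_ineq) (auto simp: a_def b_def R_mono_pos)
    moreover have "D x = int (b (d-1)) + int (card (Sx d (\<lambda>k. a k + b (k-1)))) - int (card (Sx d a)) - 1"
      using Dval[OF e] by (simp add: a_def b_def)
    moreover have "D (flip N x) = int (a (d-1)) + int (card (Sx d (\<lambda>k. b k + a (k-1)))) - int (card (Sx d b)) - 1"
      using Dval[OF e'] ff by (simp add: a_def b_def)
    ultimately show ?thesis by simp
  qed
  have s1: "(\<Sum>x\<in>V. D x) = (\<Sum>x\<in>W. D x)"
    by (rule sum.mono_neutral_right) (auto simp: fin W_def D0)
  have s2: "(\<Sum>x\<in>W. D x) = (\<Sum>x\<in>W. D (flip N x))"
    by (rule sum.reindex_bij_witness[of W "flip N" "flip N"])
       (auto simp: W_def Edge_flip EdgeV, auto simp: Edge_def)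
  have "2 * (\<Sum>x\<in>W. D x) = (\<Sum>x\<in>W. D x + D (flip N x))"
    using s2 by (simp add: sum.distrib)
  also have "\<dots> \<ge> 0" by (rule sum_nonneg) (rule pairs)
  finally have "(\<Sum>x\<in>V. D x) \<ge> 0" using s1 by simp
  then have "(\<Sum>x\<in>V. F (N # s) x) \<ge> 0" using IH by (simp add: D_def sum_subtractf)
  then show ?case by (simp add: F_def sum_subtractf)
qed


lemma subseqs_set: "u \<in> set (subseqs s) \<Longrightarrow> set u \<subseteq> set s"
  using subseqs_powset[of s] by blast

lemma in_subseqs_Cons: "t \<in> set (subseqs (a # s)) \<longleftrightarrow> (\<exists>u. t = a # u \<and> u \<in> set (subseqs s)) \<or> t \<in> set (subseqs s)"
  by (auto simp: Let_def)

lemma Nil_in_subseqs: "[] \<in> set (subseqs s)"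
  by (induct s) (auto simp: Let_def)

lemma perm_count:
  assumes "finite A" "distinct t" "set t \<subseteq> A"
  shows "card {s \<in> permutations_of_set A. t \<in> set (subseqs s)} * fact (length t) = fact (card A)"
  using assms
proof (induct "card A" arbitrary: A t)
  case 0
  then have "A = {}" by simp
  with 0 have "t = []" by auto
  then show ?case using \<open>A = {}\<close> by (simp add: Nil_in_subseqs)
next
  case (Suc m)
  note fin = Suc.prems(1)
  show ?case
  proof (cases t)
    case Nil
    then show ?thesis using fin by (simp add: Nil_in_subseqs)
  next
    case (Cons h t')
    have hA: "h \<in> A" using Suc.prems Cons by auto
    have Ane: "A \<noteq> {}" using hA by auto
    define f where "f a = card {s' \<in> permutations_of_set (A - {a}). t \<in> set (subseqs (a # s'))}" for a
    have cA1: "card (A - {a}) = m" if "a \<in> A" for a using Suc.hyps(2) that fin by simp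
    have eqset: "{s \<in> permutations_of_set A. t \<in> set (subseqs s)} =
      (\<Union>a\<in>A. (Cons a) ` {s' \<in> permutations_of_set (A - {a}). t \<in> set (subseqs (a # s'))})"
      using permutations_of_set_nonempty[OF Ane] by auto
    have cardP: "card {s \<in> permutations_of_set A. t \<in> set (subseqs s)} = (\<Sum>a\<in>A. f a)"
      unfolding eqset f_def
      by (subst card_UN_disjoint) (auto simp: fin card_image)
    have fh: "f h * fact (length t) = Suc (length t') * fact m"
    proof -
      have "{s' \<in> permutations_of_set (A - {h}). t \<in> set (subseqs (h # s'))} =
            {s' \<in> permutations_of_set (A - {h}). t' \<in> set (subseqs s')}"
      proof (intro Collect_cong conj_cong refl)
        fix s' assume "s' \<in> permutations_of_set (A - {h})"
        then have "h \<notin> set s'" by (auto dest: permutations_of_setD)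
        have nt: "t \<notin> set (subseqs s')" using subseqs_set[of t s'] Cons \<open>h \<notin> set s'\<close> by auto
        show "t \<in> set (subseqs (h # s')) \<longleftrightarrow> t' \<in> set (subseqs s')"
        proof
          assume "t \<in> set (subseqs (h # s'))"
          then have "(\<exists>u. t = h # u \<and> u \<in> set (subseqs s')) \<or> t \<in> set (subseqs s')"
            by (simp only: in_subseqs_Cons)
          then show "t' \<in> set (subseqs s')" using nt Cons by auto
        next
          assume "t' \<in> set (subseqs s')"
          then show "t \<in> set (subseqs (h # s'))" using Cons by (simp add: Let_def)
        qed
      qed
      moreover have "card {s' \<in> permutations_of_set (A - {h}). t' \<in> set (subseqs s')} * fact (length t') = fact m"
        using Suc.hyps(1)[of "A - {h}" t'] cA1[OF hA] fin Suc.prems Cons by auto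
      ultimately have "f h * fact (length t') = fact m" by (simp add: f_def)
      moreover have "fact (length t) = Suc (length t') * fact (length t')" using Cons by simp
      ultimately show ?thesis by (metis mult.assoc mult.commute)
    qed
    have f_in: "f a = 0" if "a \<in> set t'" "a \<noteq> h" for a
    proof -
      have "{s' \<in> permutations_of_set (A - {a}). t \<in> set (subseqs (a # s'))} = {}"
      proof (safe)
        fix s' assume "s' \<in> permutations_of_set (A - {a})" "t \<in> set (subseqs (a # s'))"
        then have "a \<notin> set s'" "t \<in> set (subseqs (a # s'))" by (auto dest: permutations_of_setD)
        then have "(\<exists>u. t = a # u \<and> u \<in> set (subseqs s')) \<or> t \<in> set (subseqs s')"
          by (simp only: in_subseqs_Cons)
        moreover have "t \<notin> set (subseqs s')" using subseqs_set[of t s'] that Cons \<open>a \<notin> set s'\<close> by auto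
        ultimately show "s' \<in> {}" using that Cons by auto
      qed
      then show ?thesis by (simp add: f_def)
    qed
    have f_out: "f a * fact (length t) = fact m" if "a \<in> A" "a \<notin> set t" for a
    proof -
      have "{s' \<in> permutations_of_set (A - {a}). t \<in> set (subseqs (a # s'))} =
            {s' \<in> permutations_of_set (A - {a}). t \<in> set (subseqs s')}"
      proof (intro Collect_cong conj_cong refl)
        fix s' show "t \<in> set (subseqs (a # s')) \<longleftrightarrow> t \<in> set (subseqs s')"
          unfolding in_subseqs_Cons using that Cons by auto
      qed
      moreover have "card {s' \<in> permutations_of_set (A - {a}). t \<in> set (subseqs s')} * fact (length t) = fact m"
        using Suc.hyps(1)[of "A - {a}" t] cA1[OF that(1)] fin Suc.prems that by auto
      ultimately show ?thesis by (simp add: f_def)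
    qed
    have "(\<Sum>a\<in>A. f a) * fact (length t) = (\<Sum>a\<in>A. f a * fact (length t))"
      by (simp add: sum_distrib_right)
    also have "\<dots> = (\<Sum>a\<in>A. if a \<in> set t then (if a = h then Suc (length t') * fact m else 0) else fact m)"
      using fh f_in f_out Cons by (intro sum.cong) auto
    also have "\<dots> = (\<Sum>a\<in>A \<inter> set t. (if a = h then Suc (length t') * fact m else 0)) + (\<Sum>a\<in>A \<inter> - set t. fact m)"
      using fin by (simp add: sum.If_cases)
    also have "\<dots> = Suc (length t') * fact m + card (A - set t) * fact m"
      using hA Cons fin by (simp add: sum.delta Diff_eq)
    also have "card (A - set t) = Suc m - Suc (length t')"
      using Suc.prems Suc.hyps(2) Cons by (simp add: card_Diff_subset distinct_card)
    also have "Suc (length t') * fact m + (Suc m - Suc (length t')) * fact m = Suc m * fact m"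
    proof -
      have "length t \<le> card A" using card_mono[OF fin Suc.prems(3)] distinct_card[OF Suc.prems(2)] by simp
      then have "Suc (length t') \<le> Suc m" using Cons Suc.hyps(2) by simp
      then have "Suc (length t') + (Suc m - Suc (length t')) = Suc m" by simp
      then show ?thesis by (simp only: add_mult_distrib[symmetric])
    qed
    also have "\<dots> = fact (card A)" by (simp add: Suc.hyps(2)[symmetric])
    finally show ?thesis using cardP by simp
  qed
qed


fun verts :: "bool list \<Rightarrow> nat list \<Rightarrow> bool list list" where
  "verts x [] = [x]"
| "verts x (i # t) = x # verts (flip i x) t"

lemma length_verts[simp]: "length (verts x t) = Suc (length t)"
  by (induct t arbitrary: x) auto

lemma verts_0[simp]: "verts x t ! 0 = x"
  by (cases t) auto

lemma verts_Suc: "j < length t \<Longrightarrow> verts x t ! Suc j = flip (t ! j) (verts x t ! j)"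
proof (induct t arbitrary: x j)
  case Nil then show ?case by simp
next
  case (Cons i t)
  then show ?case by (cases j) auto
qed

lemma verts_length_elem: "z \<in> set (verts x t) \<Longrightarrow> length z = length x"
  by (induct t arbitrary: x) auto

lemma verts_nth_length: "j \<le> length t \<Longrightarrow> length (verts x t ! j) = length x"
  using verts_length_elem[of "verts x t ! j" x t] by (simp add: less_Suc_eq_le)

lemma valid_edges: "valid E x t \<Longrightarrow> j < length t \<Longrightarrow> {verts x t ! j, verts x t ! Suc j} \<in> E \<and> t ! j < length x"
proof (induct t arbitrary: x j)
  case Nil then show ?case by simp
next
  case (Cons i t)
  show ?case
  proof (cases j)
    case 0 then show ?thesis using Cons by (cases t) auto
  next
    case (Suc j')
    then show ?thesis using Cons.hyps[of "flip i x" j'] Cons.prems by auto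
  qed
qed

lemma valid_verts_V:
  assumes EV: "\<And>u v. {u,v} \<in> E \<Longrightarrow> u \<in> V"
  shows "valid E x t \<Longrightarrow> x \<in> V \<Longrightarrow> set (verts x t) \<subseteq> V"
proof (induct t arbitrary: x)
  case Nil then show ?case by simp
next
  case (Cons i t)
  then have "flip i x \<in> V" using EV[of "flip i x" x] by (auto simp: insert_commute)
  then show ?case using Cons by auto
qed

lemma flip_other: "j \<noteq> i \<Longrightarrow> flip i x ! j = x ! j"
  by (simp add: flip_def)

lemma flip_same: "i < length x \<Longrightarrow> flip i x ! i = (\<not> x ! i)"
  by (simp add: flip_def)

lemma verts_coord: "i \<notin> set t \<Longrightarrow> z \<in> set (verts x t) \<Longrightarrow> z ! i = x ! i"
proof (induct t arbitrary: x)
  case Nil then show ?case by simp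
next
  case (Cons a t)
  from Cons.prems have ai: "a \<noteq> i" "i \<notin> set t" by auto
  from Cons.prems have "z = x \<or> z \<in> set (verts (flip a x) t)" by simp
  then show ?case
  proof
    assume "z \<in> set (verts (flip a x) t)"
    then have "z ! i = flip a x ! i" using Cons.hyps[of "flip a x"] ai by blast
    also have "\<dots> = x ! i" using ai by (intro flip_other) auto
    finally show ?thesis .
  qed simp
qed

lemma distinct_verts: "distinct t \<Longrightarrow> set t \<subseteq> {..<length x} \<Longrightarrow> distinct (verts x t)"
proof (induct t arbitrary: x)
  case Nil then show ?case by simp
next
  case (Cons i t)
  have il: "i < length x" using Cons.prems by auto
  have "x \<notin> set (verts (flip i x) t)"
  proof
    assume "x \<in> set (verts (flip i x) t)"
    then have "x ! i = flip i x ! i" using verts_coord[of i t x "flip i x"] Cons.prems by auto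
    then show False using flip_same[OF il] by simp
  qed
  moreover have "distinct (verts (flip i x) t)" using Cons by auto
  ultimately show ?case by simp
qed

lemma edge_dir_flip: "i < length u \<Longrightarrow> edge_dir u (flip i u) = i"
  unfolding edge_dir_def
proof (rule the_equality)
  assume "i < length u"
  then show "i < length u \<and> u ! i \<noteq> flip i u ! i" by (simp add: flip_same)
next
  fix j assume "i < length u" "j < length u \<and> u ! j \<noteq> flip i u ! j"
  then show "j = i" using flip_other by metis
qed

lemma verts_dirs:
  assumes "set t \<subseteq> {..<length x}"
  shows "map (\<lambda>j. edge_dir (verts x t ! j) (verts x t ! (j + 1))) [0..<length t] = t"
proof (rule nth_equalityI)
  fix j assume "j < length (map (\<lambda>j. edge_dir (verts x t ! j) (verts x t ! (j + 1))) [0..<length t])"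
  then have j: "j < length t" by simp
  have "t ! j < length x" using assms nth_mem[OF j] by blast
  then have "t ! j < length (verts x t ! j)" using verts_nth_length[of j t x] j by simp
  then show "map (\<lambda>j. edge_dir (verts x t ! j) (verts x t ! (j + 1))) [0..<length t] ! j = t ! j"
    using j by (simp add: verts_Suc edge_dir_flip)
qed simp


lemma card_fibers:
  assumes "finite S"
  shows "card S = (\<Sum>y\<in>f ` S. card {x\<in>S. f x = y})"
proof -
  have "S = (\<Union>y\<in>f ` S. {x\<in>S. f x = y})" by auto
  then have "card S = card (\<Union>y\<in>f ` S. {x\<in>S. f x = y})" by simp
  also have "\<dots> = (\<Sum>y\<in>f ` S. card {x\<in>S. f x = y})"
    using assms by (intro card_UN_disjoint) auto
  finally show ?thesis .
qed

lemma card_le_2_image: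
  assumes "finite S" "\<And>x. x \<in> S \<Longrightarrow> card {z\<in>S. f z = f x} \<le> 2"
  shows "card S \<le> 2 * card (f ` S)"
proof -
  have "card S = (\<Sum>y\<in>f ` S. card {x\<in>S. f x = y})" by (rule card_fibers[OF assms(1)])
  also have "\<dots> \<le> (\<Sum>y\<in>f ` S. 2)" using assms(2) by (intro sum_mono) auto
  finally show ?thesis by simp
qed

lemma card_ge_2_image:
  assumes "finite S" "\<And>x. x \<in> S \<Longrightarrow> card {z\<in>S. f z = f x} \<ge> 2"
  shows "card S \<ge> 2 * card (f ` S)"
proof -
  have "(\<Sum>y\<in>f ` S. 2) \<le> (\<Sum>y\<in>f ` S. card {x\<in>S. f x = y})" using assms(2) by (intro sum_mono) auto
  also have "\<dots> = card S" by (rule card_fibers[OF assms(1), symmetric])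
  finally show ?thesis by simp
qed

lemma sub_E:
  assumes "cube_subgraph n V E" "e \<in> E"
  shows "\<exists>a b. e = {a,b} \<and> a \<in> V \<and> b \<in> V \<and> cube_adj a b"
  using assms unfolding cube_subgraph_def by blast

lemma sub_EV:
  assumes "cube_subgraph n V E" "{u,v} \<in> E"
  shows "u \<in> V"
  using sub_E[OF assms] by (auto simp: doubleton_eq_iff)

lemma sub_len: "cube_subgraph n V E \<Longrightarrow> x \<in> V \<Longrightarrow> length x = n"
  unfolding cube_subgraph_def cube_verts_def by auto

lemma adj_flip:
  assumes "cube_adj u v"
  shows "\<exists>i<length u. v = flip i u"
proof -
  from assms have len: "length u = length v" and c: "card {i. i < length u \<and> u ! i \<noteq> v ! i} = 1"
    unfolding cube_adj_def by auto
  from c obtain i where i: "{i. i < length u \<and> u ! i \<noteq> v ! i} = {i}" by (auto simp: card_Suc_eq)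
  then have il: "i < length u" and ui: "u ! i \<noteq> v ! i" by auto
  have "v = flip i u"
  proof (rule nth_equalityI)
    show "length v = length (flip i u)" using len by simp
    fix j assume j: "j < length v"
    show "v ! j = flip i u ! j"
    proof (cases "j = i")
      case True then show ?thesis using ui il by (simp add: flip_same)
    next
      case False
      then have "u ! j = v ! j" using i j len by auto
      then show ?thesis using False by (simp add: flip_other)
    qed
  qed
  then show ?thesis using il by blast
qed

lemma handshake:
  assumes sub: "cube_subgraph n V E" and fin: "finite V"
  shows "2 * card E \<le> (\<Sum>x\<in>V. card {i. i < n \<and> Edge E x i})"
proof -
  define P where "P = (SIGMA x:V. {i. i < n \<and> Edge E x i})"
  define f where "f = (\<lambda>(x::bool list, i::nat). {x, flip i x})"
  have finP: "finite P" unfolding P_def using fin by auto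
  have cP: "card P = (\<Sum>x\<in>V. card {i. i < n \<and> Edge E x i})"
    unfolding P_def using fin by (subst card_SigmaI) auto
  have img: "f ` P = E"
  proof
    show "f ` P \<subseteq> E" unfolding P_def f_def Edge_def by auto
  next
    show "E \<subseteq> f ` P"
    proof
      fix e assume "e \<in> E"
      then obtain a b where ab: "e = {a,b}" "a \<in> V" "b \<in> V" "cube_adj a b" using sub_E[OF sub] by blast
      then obtain i where i: "i < length a" "b = flip i a" using adj_flip by blast
      have "length a = n" using sub_len[OF sub ab(2)] .
      then have "(a, i) \<in> P" using i ab \<open>e \<in> E\<close> unfolding P_def Edge_def by auto
      moreover have "f (a, i) = e" using ab i unfolding f_def by simp
      ultimately show "e \<in> f ` P" by force
    qed
  qed
  have "card P \<ge> 2 * card (f ` P)"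
  proof (rule card_ge_2_image[OF finP])
    fix p assume pP: "p \<in> P"
    then obtain x i where p: "p = (x, i)" "x \<in> V" "i < n" "Edge E x i" unfolding P_def by auto
    have e': "Edge E (flip i x) i" using Edge_flip[OF p(4)] .
    have fv: "flip i x \<in> V" using sub_EV[OF sub, of "flip i x" x] p(4) unfolding Edge_def by (auto simp: insert_commute)
    have il: "i < length x" using p(4) unfolding Edge_def by simp
    have q: "(flip i x, i) \<in> P" using e' fv p unfolding P_def by auto
    have fq: "f (flip i x, i) = f p" using p il unfolding f_def by (auto simp: insert_commute)
    have ne: "(flip i x, i) \<noteq> p" using p flip_neq[OF il] by auto
    have "{p, (flip i x, i)} \<subseteq> {z\<in>P. f z = f p}" using pP q fq by auto
    then have "card {p, (flip i x, i)} \<le> card {z\<in>P. f z = f p}"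
      by (intro card_mono) (auto simp: finP)
    then show "card {z\<in>P. f z = f p} \<ge> 2" using ne by simp
  qed
  then show ?thesis using img cP by simp
qed

definition T :: "nat \<Rightarrow> nat \<Rightarrow> nat list set" where
  "T n d = {t. distinct t \<and> set t \<subseteq> {..<n} \<and> length t = d}"

lemma finite_T: "finite (T n d)"
proof -
  have "T n d \<subseteq> {xs. set xs \<subseteq> {..<n} \<and> length xs = d}" unfolding T_def by auto
  then show ?thesis by (rule finite_subset) (rule finite_lists_length_eq, simp)
qed

lemma R1_perm: "s \<in> permutations_of_set {..<n} \<Longrightarrow> R E s 1 x = card {i. i < n \<and> Edge E x i}"
  unfolding R_1 by (subst distinct_length_filter) (auto dest: permutations_of_setD intro: arg_cong[where f=card])

lemma distinct_subseqs: "distinct s \<Longrightarrow> distinct (subseqs s)"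
  using distinct_set_subseqs distinct_map by blast

lemma Rd_perm:
  assumes "s \<in> permutations_of_set {..<n}"
  shows "R E s d x = card {t \<in> {t \<in> T n d. valid E x t}. t \<in> set (subseqs s)}"
proof -
  have ds: "distinct s" "set s = {..<n}" using permutations_of_setD[OF assms] by auto
  have "R E s d x = card ({t. length t = d \<and> valid E x t} \<inter> set (subseqs s))"
    unfolding R_def using distinct_subseqs[OF ds(1)] by (simp add: distinct_length_filter)
  also have "{t. length t = d \<and> valid E x t} \<inter> set (subseqs s) = {t \<in> {t \<in> T n d. valid E x t}. t \<in> set (subseqs s)}"
    unfolding T_def using subseqs_distinctD[OF _ ds(1)] subseqs_set[of _ s] ds(2) by blast
  finally show ?thesis .
qed

lemma Sx_card: "card (Sx d f) \<le> d - 1"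
proof -
  have "Sx d f \<subseteq> {1..<d}" unfolding Sx_def by auto
  then have "card (Sx d f) \<le> card {1..<d}" by (intro card_mono) auto
  then show ?thesis by simp
qed


lemma card_filter_sum: "finite A \<Longrightarrow> card {x\<in>A. Q x} = (\<Sum>x\<in>A. if Q x then 1 else 0)"
  using sum.inter_filter[of A "\<lambda>_. 1::nat" Q] by simp

lemma per_perm:
  assumes sub: "cube_subgraph n V E" and fin: "finite V" and d: "d \<ge> 1"
    and sP: "s \<in> permutations_of_set {..<n}"
  shows "int (2 * card E) - int (d - 1) * int (card V) \<le> (\<Sum>x\<in>V. int (R E s d x))"
proof -
  have EV: "\<And>u v. {u,v} \<in> E \<Longrightarrow> u \<in> V" using sub_EV[OF sub] by blast
  have inv: "(\<Sum>x\<in>V. int (R E s 1 x)) \<le> (\<Sum>x\<in>V. int (R E s d x) + int (card (Sx d (\<lambda>k. R E s k x))))"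
    by (rule invariant[OF EV fin d])
  have "(\<Sum>x\<in>V. int (card (Sx d (\<lambda>k. R E s k x)))) \<le> (\<Sum>x\<in>V. int (d - 1))"
    using Sx_card by (intro sum_mono) simp
  also have "\<dots> = int (d - 1) * int (card V)" by simp
  finally have b: "(\<Sum>x\<in>V. int (card (Sx d (\<lambda>k. R E s k x)))) \<le> int (d - 1) * int (card V)" .
  have "int (2 * card E) \<le> int (\<Sum>x\<in>V. card {i. i < n \<and> Edge E x i})"
    using handshake[OF sub fin] by (simp only: of_nat_le_iff)
  also have "\<dots> = (\<Sum>x\<in>V. int (card {i. i < n \<and> Edge E x i}))" by (rule of_nat_sum)
  also have "\<dots> = (\<Sum>x\<in>V. int (R E s 1 x))" using R1_perm[OF sP] by simp
  finally have c: "int (2 * card E) \<le> (\<Sum>x\<in>V. int (R E s 1 x))" .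
  have "(\<Sum>x\<in>V. int (R E s d x) + int (card (Sx d (\<lambda>k. R E s k x)))) =
     (\<Sum>x\<in>V. int (R E s d x)) + (\<Sum>x\<in>V. int (card (Sx d (\<lambda>k. R E s k x))))" by (rule sum.distrib)
  then show ?thesis using inv b c by linarith
qed

lemma G0_bound:
  assumes sub: "cube_subgraph n V E" and fin: "finite V" and deg: "d * card V \<le> 2 * card E"
  shows "fact d * card V \<le> (\<Sum>x\<in>V. card {t \<in> T n d. valid E x t})"
proof (cases "d = 0")
  case True
  have e: "{t \<in> T n d. valid E x t} = {[]}" for x
  proof
    show "{t \<in> T n d. valid E x t} \<subseteq> {[]}" unfolding T_def using True by auto
    show "{[]} \<subseteq> {t \<in> T n d. valid E x t}" unfolding T_def using True by simp
  qed
  have "(\<Sum>x\<in>V. card {t \<in> T n d. valid E x t}) = card V" unfolding e by simp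
  then show ?thesis using True by simp
next
  case False
  then have d: "d \<ge> 1" by simp
  define P where "P = permutations_of_set {..<n::nat}"
  define Tx where "Tx x = {t \<in> T n d. valid E x t}" for x
  have finTx: "finite (Tx x)" for x unfolding Tx_def using finite_T by simp
  have finP: "finite P" unfolding P_def by simp
  have cP: "card P = fact n" unfolding P_def by simp
  define S where "S = (\<Sum>s\<in>P. \<Sum>x\<in>V. R E s d x)"
  have S1: "S = (\<Sum>x\<in>V. \<Sum>t\<in>Tx x. card {s \<in> P. t \<in> set (subseqs s)})"
  proof -
    have "S = (\<Sum>s\<in>P. \<Sum>x\<in>V. \<Sum>t\<in>Tx x. if t \<in> set (subseqs s) then 1 else 0)"
      unfolding S_def
    proof (intro sum.cong refl)
      fix s x assume "s \<in> P"
      then have "R E s d x = card {t \<in> Tx x. t \<in> set (subseqs s)}"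
        unfolding P_def Tx_def by (rule Rd_perm)
      also have "\<dots> = (\<Sum>t\<in>Tx x. if t \<in> set (subseqs s) then 1 else 0)"
        by (rule card_filter_sum[OF finTx])
      finally show "R E s d x = (\<Sum>t\<in>Tx x. if t \<in> set (subseqs s) then 1 else 0)" .
    qed
    also have "\<dots> = (\<Sum>x\<in>V. \<Sum>s\<in>P. \<Sum>t\<in>Tx x. if t \<in> set (subseqs s) then 1 else 0)"
      by (rule sum.swap)
    also have "\<dots> = (\<Sum>x\<in>V. \<Sum>t\<in>Tx x. \<Sum>s\<in>P. if t \<in> set (subseqs s) then 1 else 0)"
      by (intro sum.cong refl sum.swap)
    also have "\<dots> = (\<Sum>x\<in>V. \<Sum>t\<in>Tx x. card {s \<in> P. t \<in> set (subseqs s)})"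
      by (intro sum.cong refl card_filter_sum[OF finP, symmetric])
    finally show ?thesis .
  qed
  have S2: "fact d * S = fact n * (\<Sum>x\<in>V. card (Tx x))"
  proof -
    have "fact d * S = (\<Sum>x\<in>V. \<Sum>t\<in>Tx x. card {s \<in> P. t \<in> set (subseqs s)} * fact d)"
      unfolding S1 sum_distrib_left by (simp only: mult.commute)
    also have "\<dots> = (\<Sum>x\<in>V. \<Sum>t\<in>Tx x. fact n)"
    proof (intro sum.cong refl)
      fix x t assume "t \<in> Tx x"
      then have "distinct t" "set t \<subseteq> {..<n}" "length t = d" unfolding Tx_def T_def by auto
      then show "card {s \<in> P. t \<in> set (subseqs s)} * fact d = fact n"
        using perm_count[of "{..<n}" t] unfolding P_def by simp
    qed
    also have "\<dots> = (\<Sum>x\<in>V. fact n * card (Tx x))" by (simp add: mult.commute)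
    also have "\<dots> = fact n * (\<Sum>x\<in>V. card (Tx x))" by (simp only: sum_distrib_left)
    finally show ?thesis .
  qed
  have S3: "int (fact n) * (int (2 * card E) - int (d - 1) * int (card V)) \<le> int S"
  proof -
    have "int (fact n) * (int (2 * card E) - int (d - 1) * int (card V)) =
      (\<Sum>s\<in>P. int (2 * card E) - int (d - 1) * int (card V))" using cP by simp
    also have "\<dots> \<le> (\<Sum>s\<in>P. \<Sum>x\<in>V. int (R E s d x))"
      using per_perm[OF sub fin d] unfolding P_def by (intro sum_mono) auto
    also have "\<dots> = int S" unfolding S_def by simp
    finally show ?thesis .
  qed
  have "int (card V) \<le> int (2 * card E) - int (d - 1) * int (card V)"
  proof -
    have h1: "int (d * card V) \<le> int (2 * card E)" using deg by (simp only: of_nat_le_iff)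
    have h2: "int (d - 1) * int (card V) = int (d * card V) - int (card V)" using d by (simp add: of_nat_diff left_diff_distrib)
    show ?thesis using h1 h2 by linarith
  qed
  then have "int (fact n) * int (fact d) * int (card V) \<le> int (fact n) * int (fact d) * (int (2 * card E) - int (d - 1) * int (card V))"
    by (intro mult_left_mono) auto
  also have "\<dots> = int (fact d) * (int (fact n) * (int (2 * card E) - int (d - 1) * int (card V)))" by (simp only: ac_simps)
  also have "\<dots> \<le> int (fact d) * int S" by (rule mult_left_mono[OF S3]) simp
  also have "\<dots> = int (fact n) * int (\<Sum>x\<in>V. card (Tx x))"
  proof -
    have "int (fact d * S) = int (fact n * (\<Sum>x\<in>V. card (Tx x)))" using S2 by (simp only:)
    then show ?thesis by (simp only: of_nat_mult)
  qed
  finally have "int (fact n) * (int (fact d) * int (card V)) \<le> int (fact n) * int (\<Sum>x\<in>V. card (Tx x))"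
    by (simp only: mult.assoc)
  then have "int (fact d) * int (card V) \<le> int (\<Sum>x\<in>V. card (Tx x))"
    by (rule mult_left_le_imp_le) simp
  then have "int (fact d * card V) \<le> int (\<Sum>x\<in>V. card (Tx x))" by (simp only: of_nat_mult)
  then show ?thesis unfolding Tx_def by (simp only: of_nat_le_iff)
qed


theorem theorem5:
  fixes n d :: nat and V :: "bool list set" and E :: "bool list set set"
  assumes "cube_subgraph n V E"
    and "V \<noteq> {}"
    and "2 * real (card E) / real (card V) \<ge> real d"
  shows "real (card (geodesics V E d)) \<ge> real (fact d) * real (card V) / 2"
proof -
  note sub = assms(1)
  have EV: "\<And>u v. {u,v} \<in> E \<Longrightarrow> u \<in> V" using sub_EV[OF sub] by blast
  have "V \<subseteq> {xs. set xs \<subseteq> (UNIV :: bool set) \<and> length xs = n}"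
    using sub unfolding cube_subgraph_def cube_verts_def by auto
  then have fin: "finite V" by (rule finite_subset) (rule finite_lists_length_eq, simp)
  have cV: "card V > 0" using fin assms(2) by (simp add: card_gt_0_iff)
  have "real d * real (card V) \<le> 2 * real (card E)"
    using assms(3) cV by (simp add: le_divide_eq)
  then have deg: "d * card V \<le> 2 * card E"
    by (metis of_nat_le_iff of_nat_mult of_nat_numeral)
  define Tx where "Tx x = {t \<in> T n d. valid E x t}" for x
  define GS where "GS = (SIGMA x:V. Tx x)"
  define SEQ where "SEQ = {p. is_geodesic_seq V E d p}"
  have finTx: "finite (Tx x)" for x unfolding Tx_def using finite_T by simp
  have cGS: "card GS = (\<Sum>x\<in>V. card (Tx x))" unfolding GS_def using fin finTx by simp
  have b1: "fact d * card V \<le> card GS" using G0_bound[OF sub fin deg] cGS unfolding Tx_def by simp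
  have finSEQ: "finite SEQ"
  proof -
    have "SEQ \<subseteq> {p. set p \<subseteq> V \<and> length p = d + 1}" unfolding SEQ_def is_geodesic_seq_def by auto
    then show ?thesis by (rule finite_subset) (rule finite_lists_length_eq[OF fin])
  qed
  define g where "g = (\<lambda>(x, t). verts x t)"
  have gS: "g y \<in> SEQ" if yG: "y \<in> GS" for y
  proof -
    obtain x t where y: "y = (x, t)" "x \<in> V" "distinct t" "set t \<subseteq> {..<n}" "length t = d" "valid E x t"
      using yG unfolding GS_def Tx_def T_def by (cases y) auto
    have lx: "length x = n" using sub_len[OF sub y(2)] .
    have st: "set t \<subseteq> {..<length x}" using y lx by simp
    have "is_geodesic_seq V E d (verts x t)"
      unfolding is_geodesic_seq_def
    proof (intro conjI allI impI)
      show "length (verts x t) = d + 1" using y by simp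
      show "set (verts x t) \<subseteq> V" using valid_verts_V[OF EV y(6) y(2)] .
      show "distinct (verts x t)" using distinct_verts[OF y(3) st] .
      fix i assume "i < d"
      then show "{verts x t ! i, verts x t ! (i + 1)} \<in> E" using valid_edges[OF y(6), of i] y by simp
    next
      show "distinct (map (\<lambda>i. edge_dir (verts x t ! i) (verts x t ! (i + 1))) [0..<d])"
        using verts_dirs[OF st] y by simp
    qed
    then show ?thesis using y unfolding SEQ_def g_def by simp
  qed
  have inj: "inj_on g GS"
  proof (rule inj_onI)
    fix y y' assume yy: "y \<in> GS" "y' \<in> GS" "g y = g y'"
    obtain x t where y: "y = (x, t)" "x \<in> V" "set t \<subseteq> {..<n}" "length t = d"
      using yy(1) unfolding GS_def Tx_def T_def by (cases y) auto
    obtain x' t' where y': "y' = (x', t')" "x' \<in> V" "set t' \<subseteq> {..<n}" "length t' = d"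
      using yy(2) unfolding GS_def Tx_def T_def by (cases y') auto
    have e: "verts x t = verts x' t'" using yy(3) y y' unfolding g_def by simp
    have "x = x'" using arg_cong[OF e, of "\<lambda>p. p ! 0"] by simp
    moreover have "t = t'"
    proof -
      have "t = map (\<lambda>j. edge_dir (verts x t ! j) (verts x t ! (j + 1))) [0..<length t]"
        using verts_dirs[of t x] y sub_len[OF sub y(2)] by simp
      also have "\<dots> = map (\<lambda>j. edge_dir (verts x' t' ! j) (verts x' t' ! (j + 1))) [0..<length t']"
        using e y y' by simp
      also have "\<dots> = t'"
        using verts_dirs[of t' x'] y' sub_len[OF sub y'(2)] by simp
      finally show ?thesis .
    qed
    ultimately show "y = y'" using y y' by simp
  qed
  have b2: "card GS \<le> card SEQ"
    using card_inj_on_le[OF inj _ finSEQ] gS by blast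
  have geq: "geodesics V E d = (\<lambda>p. {p, rev p}) ` SEQ"
    unfolding geodesics_def SEQ_def by auto
  have b3: "card SEQ \<le> 2 * card (geodesics V E d)"
    unfolding geq
  proof (rule card_le_2_image[OF finSEQ])
    fix p assume "p \<in> SEQ"
    have "{z \<in> SEQ. {z, rev z} = {p, rev p}} \<subseteq> {p, rev p}" by (auto simp: doubleton_eq_iff)
    then have "card {z \<in> SEQ. {z, rev z} = {p, rev p}} \<le> card {p, rev p}" by (intro card_mono) auto
    also have "\<dots> \<le> 2" by (simp add: card_insert_if)
    finally show "card {z \<in> SEQ. {z, rev z} = {p, rev p}} \<le> 2" .
  qed
  have "fact d * card V \<le> 2 * card (geodesics V E d)" using b1 b2 b3 by linarith
  then have "real (fact d * card V) \<le> real (2 * card (geodesics V E d))" by (simp only: of_nat_le_iff)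
  then show ?thesis by simp
qed

end
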